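(* Let $G$ be a connected bipartite graph with color classes $E$ and $V$, let $\mathbf f$ be a hypertree of $(V,E)$ and $\Gamma$ a spanning tree of $G$ realizing $\mathbf f$. Let $E'\subset E$ be tight at $\mathbf f$. Then each part of the partition of $E'$ induced by the connected components of $\Gamma|_{E'}$ is itself tight at $\mathbf f$.
   Context: A hypertree of $(V,E)$ is a function $\mathbf f\colon E\to\mathbf N$ such that some spanning tree $\Gamma$ of $G$ has degree $\mathbf f(e)+1$ at every $e\in E$; such $\Gamma$ realizes $\mathbf f$. For a subgraph $H$ of $G$ and $E'\subset E$, $H|_{E'}$ is the graph formed by $E'$, all edges of $H$ adjacent to elements of $E'$, and their endpoints in $V$. Let $c(E')$ be the number of connected components of $G|_{E'}$ and $\bigcup E'$ the set of vertices of $V$ in $G|_{E'}$; set $\mu(\varnothing)=0$ and $\mu(E')=|\bigcup E'|-c(E')$ otherwise. A set $E'\subset E$ is tight at $\mathbf f$ if $\sum_{e\in E'}\mathbf f(e)=\mu(E')$. The components of $\Gamma|_{E'}$ partition $E'$. *)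

theory Defs
  imports Main
begin

text \<open>A bipartite graph with colour classes E (type 'e) and V (type 'v) is given by
  a set of edges G, a subset of E \<times> V. Vertices are Inl e / Inr v.
  Subgraphs (e.g. spanning trees) are subsets of the edge set with the same vertex set.\<close>

definition adj :: "('e \<times> 'v) set \<Rightarrow> ('e + 'v) \<Rightarrow> ('e + 'v) \<Rightarrow> bool" where
  "adj H x y \<longleftrightarrow> (\<exists>e v. (e, v) \<in> H \<and> ((x = Inl e \<and> y = Inr v) \<or> (x = Inr v \<and> y = Inl e)))"

definition reach :: "('e \<times> 'v) set \<Rightarrow> ('e + 'v) \<Rightarrow> ('e + 'v) \<Rightarrow> bool" where
  "reach H x y \<longleftrightarrow> (x, y) \<in> {(a, b). adj H a b}\<^sup>*"

definition verts :: "'e set \<Rightarrow> 'v set \<Rightarrow> ('e + 'v) set" where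
  "verts E V = Inl ` E \<union> Inr ` V"

definition bipartite_graph :: "'e set \<Rightarrow> 'v set \<Rightarrow> ('e \<times> 'v) set \<Rightarrow> bool" where
  "bipartite_graph E V G \<longleftrightarrow> finite E \<and> finite V \<and> G \<subseteq> E \<times> V"

definition connected_graph :: "'e set \<Rightarrow> 'v set \<Rightarrow> ('e \<times> 'v) set \<Rightarrow> bool" where
  "connected_graph E V H \<longleftrightarrow> (\<forall>x\<in>verts E V. \<forall>y\<in>verts E V. reach H x y)"

definition acyclic_graph :: "('e \<times> 'v) set \<Rightarrow> bool" where
  "acyclic_graph H \<longleftrightarrow> (\<forall>(e, v)\<in>H. \<not> reach (H - {(e, v)}) (Inl e) (Inr v))"

definition spanning_tree :: "'e set \<Rightarrow> 'v set \<Rightarrow> ('e \<times> 'v) set \<Rightarrow> ('e \<times> 'v) set \<Rightarrow> bool" where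
  "spanning_tree E V G T \<longleftrightarrow> T \<subseteq> G \<and> connected_graph E V T \<and> acyclic_graph T"

definition deg :: "('e \<times> 'v) set \<Rightarrow> 'e \<Rightarrow> nat" where
  "deg H e = card {v. (e, v) \<in> H}"

definition realizes :: "'e set \<Rightarrow> 'v set \<Rightarrow> ('e \<times> 'v) set \<Rightarrow> ('e \<times> 'v) set \<Rightarrow> ('e \<Rightarrow> nat) \<Rightarrow> bool" where
  "realizes E V G T f \<longleftrightarrow> spanning_tree E V G T \<and> (\<forall>e\<in>E. deg T e = f e + 1)"

definition hypertree :: "'e set \<Rightarrow> 'v set \<Rightarrow> ('e \<times> 'v) set \<Rightarrow> ('e \<Rightarrow> nat) \<Rightarrow> bool" where
  "hypertree E V G f \<longleftrightarrow> (\<exists>T. realizes E V G T f)"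

text \<open>H|_{E'}: edges of H adjacent to E', vertices E' and their endpoints.\<close>
definition restr_edges :: "('e \<times> 'v) set \<Rightarrow> 'e set \<Rightarrow> ('e \<times> 'v) set" where
  "restr_edges H E' = {(e, v) \<in> H. e \<in> E'}"

definition union_set :: "('e \<times> 'v) set \<Rightarrow> 'e set \<Rightarrow> 'v set" where
  "union_set H E' = {v. \<exists>e\<in>E'. (e, v) \<in> H}"

definition restr_verts :: "('e \<times> 'v) set \<Rightarrow> 'e set \<Rightarrow> ('e + 'v) set" where
  "restr_verts H E' = Inl ` E' \<union> Inr ` union_set H E'"

definition components :: "('e \<times> 'v) set \<Rightarrow> 'e set \<Rightarrow> ('e + 'v) set set" where
  "components H E' =
     (\<lambda>x. {y \<in> restr_verts H E'. reach (restr_edges H E') x y}) ` restr_verts H E'"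

definition mu :: "('e \<times> 'v) set \<Rightarrow> 'e set \<Rightarrow> int" where
  "mu G E' = (if E' = {} then 0
              else int (card (union_set G E')) - int (card (components G E')))"

definition tight :: "('e \<times> 'v) set \<Rightarrow> ('e \<Rightarrow> nat) \<Rightarrow> 'e set \<Rightarrow> bool" where
  "tight G f E' \<longleftrightarrow> (\<Sum>e\<in>E'. int (f e)) = mu G E'"

end

theory Submission
  imports Defs
begin


definition cl :: "('e + 'v) set \<Rightarrow> ('e \<times> 'v) set \<Rightarrow> ('e + 'v) \<Rightarrow> ('e + 'v) set" where
  "cl W X x = {y \<in> W. reach X x y}"

definition cls :: "('e + 'v) set \<Rightarrow> ('e \<times> 'v) set \<Rightarrow> ('e + 'v) set set" where
  "cls W X = cl W X ` W"

definition inW :: "('e + 'v) set \<Rightarrow> ('e \<times> 'v) set \<Rightarrow> bool" where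
  "inW W X \<longleftrightarrow> (\<forall>(e, v)\<in>X. Inl e \<in> W \<and> Inr v \<in> W)"

lemma reach_refl: "reach H x x" by (simp add: reach_def)

lemma reach_trans: "reach H x y \<Longrightarrow> reach H y z \<Longrightarrow> reach H x z"
  unfolding reach_def by (rule rtrancl_trans)

lemma reach_sym: assumes "reach H x y" shows "reach H y x"
proof -
  have "(x, y) \<in> {(a, b). adj H a b}\<^sup>*" using assms by (simp add: reach_def)
  then have "(y, x) \<in> {(a, b). adj H a b}\<^sup>*"
  proof (induction rule: rtrancl_induct)
    case base then show ?case by simp
  next
    case (step y z)
    then have "(z, y) \<in> {(a, b). adj H a b}" by (auto simp: adj_def)
    then show ?case using step(3) by (rule converse_rtrancl_into_rtrancl)
  qed
  then show ?thesis by (simp add: reach_def)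
qed

lemma reach_mono: assumes "H \<subseteq> H'" "reach H x y" shows "reach H' x y"
proof -
  have "{(a, b). adj H a b} \<subseteq> {(a, b). adj H' a b}" using assms(1) by (auto simp: adj_def)
  then show ?thesis using assms(2) unfolding reach_def using rtrancl_mono by blast
qed

lemma reach_edge: "(e, v) \<in> H \<Longrightarrow> reach H (Inl e) (Inr v)"
  unfolding reach_def by (rule r_into_rtrancl) (auto simp: adj_def)

lemma reach_closed: assumes "inW W X" "x \<in> W" "reach X x y" shows "y \<in> W"
proof -
  have "(x, y) \<in> {(a, b). adj X a b}\<^sup>*" using assms by (simp add: reach_def)
  then show ?thesis
  proof (induction rule: rtrancl_induct)
    case base then show ?case using assms by simp
  next
    case (step y z) then show ?case using assms(1) by (auto simp: adj_def inW_def)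
  qed
qed

lemma cl_self: "a \<in> W \<Longrightarrow> a \<in> cl W X a"
  by (simp add: cl_def reach_refl)

lemma cl_eq: assumes "reach X a b" shows "cl W X a = cl W X b"
  using assms reach_sym reach_trans unfolding cl_def by blast

lemma cl_eq_iff: assumes "a \<in> W" "b \<in> W" shows "cl W X a = cl W X b \<longleftrightarrow> reach X a b"
proof
  assume "cl W X a = cl W X b"
  then have "b \<in> cl W X a" using cl_self[OF assms(2)] by simp
  then show "reach X a b" by (simp add: cl_def)
qed (rule cl_eq)

lemma g_cl:
  assumes "X \<subseteq> Y" "a \<in> W"
  shows "{y \<in> W. \<exists>b\<in>cl W X a. reach Y b y} = cl W Y a"
proof (intro equalityI subsetI)
  fix y assume "y \<in> {y \<in> W. \<exists>b\<in>cl W X a. reach Y b y}"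
  then obtain b where "y \<in> W" "reach X a b" "reach Y b y" by (auto simp: cl_def)
  then have "reach Y a b" "reach Y b y" using reach_mono[OF assms(1)] by auto
  then show "y \<in> cl W Y a" using \<open>y \<in> W\<close> reach_trans[of Y a b y] by (auto simp: cl_def)
next
  fix y assume "y \<in> cl W Y a"
  then show "y \<in> {y \<in> W. \<exists>b\<in>cl W X a. reach Y b y}"
    using cl_self[OF assms(2), of X] by (auto simp: cl_def)
qed

lemma cls_image:
  assumes "X \<subseteq> Y"
  shows "(\<lambda>K. {y \<in> W. \<exists>b\<in>K. reach Y b y}) ` cls W X = cls W Y"
  unfolding cls_def image_image using g_cl[OF assms] by (auto intro!: image_cong)

lemma cls_finite: "finite W \<Longrightarrow> finite (cls W X)"
  by (simp add: cls_def)

lemma L2: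
  assumes "finite W" "X \<subseteq> Y"
  shows "card (cls W Y) \<le> card (cls W X)"
    and "card (cls W Y) = card (cls W X) \<Longrightarrow> x \<in> W \<Longrightarrow> y \<in> W \<Longrightarrow> reach Y x y \<Longrightarrow> reach X x y"
proof -
  let ?g = "\<lambda>K. {y \<in> W. \<exists>b\<in>K. reach Y b y}"
  show "card (cls W Y) \<le> card (cls W X)"
    using cls_image[OF assms(2), of W] card_image_le[OF cls_finite[OF assms(1)], of ?g X] by simp
  assume eq: "card (cls W Y) = card (cls W X)" and xy: "x \<in> W" "y \<in> W" "reach Y x y"
  have inj: "inj_on ?g (cls W X)"
    using eq cls_image[OF assms(2), of W] inj_on_iff_eq_card[OF cls_finite[OF assms(1)], of ?g] by simp
  have gc: "?g (cl W X a) = cl W Y a" if "a \<in> W" for a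
    using g_cl[OF assms(2) that] .
  have "cl W Y x = cl W Y y" by (rule cl_eq[OF xy(3)])
  then have "?g (cl W X x) = ?g (cl W X y)" by (simp only: gc[OF xy(1)] gc[OF xy(2)])
  moreover have "cl W X x \<in> cls W X" "cl W X y \<in> cls W X" using xy by (auto simp: cls_def)
  ultimately have "cl W X x = cl W X y" using inj_onD[OF inj] by blast
  then show "reach X x y" using cl_eq_iff[OF xy(1) xy(2), of X] by simp
qed

lemma acyclic_mono: assumes "acyclic_graph Y" "X \<subseteq> Y" shows "acyclic_graph X"
  unfolding acyclic_graph_def
proof (intro ballI, clarify)
  fix e v assume "(e, v) \<in> X" "reach (X - {(e, v)}) (Inl e) (Inr v)"
  moreover have "X - {(e, v)} \<subseteq> Y - {(e, v)}" using assms(2) by blast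
  ultimately have "(e, v) \<in> Y" "reach (Y - {(e, v)}) (Inl e) (Inr v)"
    using assms(2) reach_mono by blast+
  then show False using assms(1) unfolding acyclic_graph_def by blast
qed

lemma L1:
  assumes "finite X" "finite W" "inW W X" "acyclic_graph X"
  shows "card X + card (cls W X) \<le> card W"
  using assms
proof (induction X rule: finite_induct)
  case empty
  then show ?case unfolding cls_def using card_image_le by auto
next
  case (insert x X)
  obtain e v where x: "x = (e, v)" by (cases x)
  have ac: "acyclic_graph X" using insert(6) acyclic_mono by blast
  have inX: "inW W X" using insert(5) by (auto simp: inW_def)
  have IH: "card X + card (cls W X) \<le> card W" using insert ac inX by blast
  have nr: "\<not> reach X (Inl e) (Inr v)"
    using insert(6) insert(2) x unfolding acyclic_graph_def by auto
  have W: "Inl e \<in> W" "Inr v \<in> W" using insert(5) x by (auto simp: inW_def)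
  let ?Y = "insert x X"
  let ?g = "\<lambda>K. {y \<in> W. \<exists>b\<in>K. reach ?Y b y}"
  have img: "?g ` cls W X = cls W ?Y" by (rule cls_image) auto
  have gc: "?g (cl W X a) = cl W ?Y a" if "a \<in> W" for a
    using g_cl[of X ?Y a W] that by blast
  have "reach ?Y (Inl e) (Inr v)" using x by (auto intro: reach_edge)
  then have "cl W ?Y (Inl e) = cl W ?Y (Inr v)" by (rule cl_eq)
  then have "?g (cl W X (Inl e)) = ?g (cl W X (Inr v))" using gc[OF W(1)] gc[OF W(2)] by simp
  moreover have "cl W X (Inl e) \<noteq> cl W X (Inr v)" using cl_eq_iff[OF W] nr by blast
  moreover have "cl W X (Inl e) \<in> cls W X" "cl W X (Inr v) \<in> cls W X" using W by (auto simp: cls_def)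
  ultimately have "\<not> inj_on ?g (cls W X)" by (meson inj_onD)
  then have "card (cls W ?Y) \<noteq> card (cls W X)"
    using img inj_on_iff_eq_card[OF cls_finite[OF insert(4)], of ?g] by simp
  moreover have "card (cls W ?Y) \<le> card (cls W X)"
    using img card_image_le[OF cls_finite[OF insert(4)], of ?g X] by simp
  ultimately show ?case using IH insert(1,2) by simp
qed

lemma edge_class:
  assumes "inW W X" "(e, v) \<in> X"
  shows "Inl e \<in> cl W X a \<longleftrightarrow> Inr v \<in> cl W X a"
proof -
  have r1: "reach X (Inl e) (Inr v)" using assms(2) by (rule reach_edge)
  have r2: "reach X (Inr v) (Inl e)" using reach_sym[OF r1] .
  have "Inl e \<in> W" "Inr v \<in> W" using assms by (auto simp: inW_def)
  then show ?thesis using r1 r2 reach_trans[of X a] by (auto simp: cl_def)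
qed

lemma reach_restrict:
  assumes "inW W X" "a \<in> W" "x \<in> cl W X a" "reach X x y"
  shows "reach {(e, v) \<in> X. Inl e \<in> cl W X a} x y \<and> y \<in> cl W X a"
proof -
  let ?K = "cl W X a"
  let ?XK = "{(e, v) \<in> X. Inl e \<in> ?K}"
  have "(x, y) \<in> {(a, b). adj X a b}\<^sup>*" using assms by (simp add: reach_def)
  then show ?thesis
  proof (induction rule: rtrancl_induct)
    case base then show ?case using assms(3) reach_refl by auto
  next
    case (step y z)
    then have yK: "y \<in> ?K" and ry: "reach ?XK x y" by auto
    from step(2) have adj: "adj X y z" by simp
    then obtain e v where ev: "(e, v) \<in> X" "(y = Inl e \<and> z = Inr v) \<or> (y = Inr v \<and> z = Inl e)"
      by (auto simp: adj_def)
    have zW: "z \<in> W" using ev assms(1) by (auto simp: inW_def)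
    have "reach X y z" unfolding reach_def using step(2) by (rule r_into_rtrancl)
    moreover have "reach X a y" using yK by (simp add: cl_def)
    ultimately have zK: "z \<in> ?K" using zW reach_trans by (auto simp: cl_def)
    have "Inl e \<in> ?K" using ev yK zK by auto
    then have "(e, v) \<in> ?XK" using ev by auto
    then have "adj ?XK y z" using ev by (auto simp: adj_def)
    then have "reach ?XK y z" unfolding reach_def by auto
    then show ?case using ry zK reach_trans by blast
  qed
qed

lemma L1K:
  assumes "finite X" "finite W" "inW W X" "acyclic_graph X" "a \<in> W"
  shows "card {(e, v) \<in> X. Inl e \<in> cl W X a} + 1 \<le> card (cl W X a)"
proof -
  let ?K = "cl W X a"
  let ?XK = "{(e, v) \<in> X. Inl e \<in> ?K}"
  have inK: "inW ?K ?XK" using edge_class[OF assms(3)] by (auto simp: inW_def)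
  have fK: "finite ?K" using assms(2) by (simp add: cl_def)
  have cK: "cl ?K ?XK x = ?K" if "x \<in> ?K" for x
  proof (intro equalityI subsetI)
    fix y assume "y \<in> ?K"
    then have "reach X a y" "reach X a x" using that by (auto simp: cl_def)
    then have "reach X x y" using reach_sym reach_trans by metis
    then have "reach ?XK x y" using reach_restrict[OF assms(3,5) that] by blast
    then show "y \<in> cl ?K ?XK x" using \<open>y \<in> ?K\<close> by (simp add: cl_def)
  qed (simp add: cl_def)
  have "cls ?K ?XK = {?K}" unfolding cls_def using cK cl_self[OF assms(5), of X] by auto
  moreover have "finite ?XK" using assms(1) by (rule finite_subset[rotated]) auto
  moreover have "acyclic_graph ?XK" using assms(4) by (rule acyclic_mono) auto
  ultimately show ?thesis using L1[of ?XK ?K] fK inK by simp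
qed

lemma cls_disj: assumes "K1 \<in> cls W X" "K2 \<in> cls W X" "K1 \<noteq> K2" shows "K1 \<inter> K2 = {}"
proof -
  obtain a b where ab: "K1 = cl W X a" "K2 = cl W X b" using assms by (auto simp: cls_def)
  show ?thesis
  proof (rule ccontr)
    assume "K1 \<inter> K2 \<noteq> {}"
    then obtain y where "reach X a y" "reach X b y" using ab by (auto simp: cl_def)
    then have "reach X a b" using reach_sym reach_trans by blast
    then show False using cl_eq assms(3) ab by metis
  qed
qed

lemma part_card: assumes "finite W" shows "(\<Sum>K\<in>cls W X. card K) = card W"
proof -
  have "\<Union>(cls W X) = W" unfolding cls_def using cl_self by (auto simp: cl_def)
  moreover have "card (\<Union>(cls W X)) = sum card (cls W X)"
    by (rule card_Union_disjoint) (auto simp: pairwise_def disjnt_def cls_disj,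
        use assms in \<open>auto simp: cls_def cl_def\<close>)
  ultimately show ?thesis by simp
qed

lemma part_edges:
  assumes "finite W" "finite X" "inW W X"
  shows "(\<Sum>K\<in>cls W X. card {(e, v) \<in> X. Inl e \<in> K}) = card X"
proof -
  have "(\<Union>K\<in>cls W X. {(e, v) \<in> X. Inl e \<in> K}) = X"
    using assms(3) cl_self unfolding cls_def inW_def by fastforce
  moreover have "card (\<Union>K\<in>cls W X. {(e, v) \<in> X. Inl e \<in> K}) =
      (\<Sum>K\<in>cls W X. card {(e, v) \<in> X. Inl e \<in> K})"
  proof (rule card_UN_disjoint)
    show "finite (cls W X)" using assms(1) by (rule cls_finite)
    show "\<forall>i\<in>cls W X. finite {(e, v) \<in> X. Inl e \<in> i}"
      using assms(2) by (auto intro: finite_subset[rotated])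
    show "\<forall>i\<in>cls W X. \<forall>j\<in>cls W X. i \<noteq> j \<longrightarrow>
      {(e, v) \<in> X. Inl e \<in> i} \<inter> {(e, v) \<in> X. Inl e \<in> j} = {}"
      using cls_disj by blast
  qed
  ultimately show ?thesis by simp
qed



lemma sumf:
  assumes "finite E" "finite V" "\<Gamma> \<subseteq> E \<times> V" "\<forall>e\<in>E. deg \<Gamma> e = f e + 1" "S \<subseteq> E"
  shows "(\<Sum>e\<in>S. int (f e)) = int (card (restr_edges \<Gamma> S)) - int (card S)"
proof -
  have fS: "finite S" using finite_subset[OF assms(5,1)] .
  have eqS: "restr_edges \<Gamma> S = (SIGMA e:S. {v. (e, v) \<in> \<Gamma>})" by (auto simp: restr_edges_def)
  have finS: "\<forall>e\<in>S. finite {v. (e, v) \<in> \<Gamma>}"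
  proof
    fix e assume "e \<in> S"
    show "finite {v. (e, v) \<in> \<Gamma>}"
      by (rule finite_subset[OF _ assms(2)]) (use assms(3) in auto)
  qed
  have "card (restr_edges \<Gamma> S) = (\<Sum>e\<in>S. deg \<Gamma> e)"
    unfolding eqS deg_def by (rule card_SigmaI[OF fS finS])
  also have "\<dots> = (\<Sum>e\<in>S. f e + 1)"
    by (rule sum.cong) (use assms(4,5) in auto)
  also have "\<dots> = (\<Sum>e\<in>S. f e) + card S" unfolding sum.distrib by simp
  finally have "int (card (restr_edges \<Gamma> S)) = int (\<Sum>e\<in>S. f e) + int (card S)"
    by simp
  moreover have "int (\<Sum>e\<in>S. f e) = (\<Sum>e\<in>S. int (f e))" by (rule of_nat_sum)
  ultimately show ?thesis by linarith
qed

lemma card_rv: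
  assumes "finite S" "finite (union_set H S)"
  shows "card (restr_verts H S) = card S + card (union_set H S)"
  unfolding restr_verts_def using assms
  by (subst card_Un_disjoint) (auto simp: card_image)

theorem lemma2p9:
  fixes E :: "'e set" and V :: "'v set" and G \<Gamma> :: "('e \<times> 'v) set" and f :: "'e \<Rightarrow> nat"
    and E' :: "'e set"
  assumes "bipartite_graph E V G"
    and "connected_graph E V G"
    and "hypertree E V G f"
    and "realizes E V G \<Gamma> f"
    and "E' \<subseteq> E"
    and "tight G f E'"
  shows "\<forall>C \<in> components \<Gamma> E'. tight G f {e. Inl e \<in> C}"
proof
  fix C assume C0: "C \<in> components \<Gamma> E'"
  have fE: "finite E" and fV: "finite V" and GEV: "G \<subseteq> E \<times> V"
    using assms(1) by (auto simp: bipartite_graph_def)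
  have GG: "\<Gamma> \<subseteq> G" and acG: "acyclic_graph \<Gamma>" and degs: "\<forall>e\<in>E. deg \<Gamma> e = f e + 1"
    using assms(4) by (auto simp: realizes_def spanning_tree_def)
  have GamEV: "\<Gamma> \<subseteq> E \<times> V" using GG GEV by blast
  have fE': "finite E'" using finite_subset[OF assms(5) fE] .
  define F where "F = restr_edges \<Gamma> E'"
  define WF where "WF = restr_verts \<Gamma> E'"
  define H where "H = restr_edges G E'"
  define WH where "WH = restr_verts G E'"
  have compsdef: "components X S = cls (restr_verts X S) (restr_edges X S)"
    for X :: "('e \<times> 'v) set" and S
    unfolding components_def cls_def cl_def by (rule refl)
  have finU: "finite (union_set X S)" if "X \<subseteq> E \<times> V" for X :: "('e \<times> 'v) set" and S
    by (rule finite_subset[OF _ fV]) (use that in \<open>auto simp: union_set_def\<close>)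
  have fEV: "finite (E \<times> V)" using fE fV by simp
  have fF: "finite F"
    by (rule finite_subset[OF _ fEV]) (use GamEV in \<open>auto simp: F_def restr_edges_def\<close>)
  have fH: "finite H"
    by (rule finite_subset[OF _ fEV]) (use GEV in \<open>auto simp: H_def restr_edges_def\<close>)
  have fWF: "finite WF" and fWH: "finite WH"
    using finU[OF GamEV] finU[OF GEV] fE' by (auto simp: WF_def WH_def restr_verts_def)
  have FH: "F \<subseteq> H" using GG by (auto simp: F_def H_def restr_edges_def)
  have WFH: "WF \<subseteq> WH" using GG by (auto simp: WF_def WH_def restr_verts_def union_set_def)
  have inWF: "inW WF F" by (auto simp: inW_def F_def WF_def restr_edges_def restr_verts_def union_set_def)
  have inWH: "inW WH H" by (auto simp: inW_def H_def WH_def restr_edges_def restr_verts_def union_set_def)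
  have inWHF: "inW WH F" using inWF WFH by (auto simp: inW_def)
  have acF: "acyclic_graph F" using acG by (rule acyclic_mono) (auto simp: F_def restr_edges_def)
  obtain a where aWF: "a \<in> WF" and Ca: "C = cl WF F a"
    using C0 by (auto simp: compsdef cls_def WF_def F_def)
  have CWH: "C = cl WH F a"
    using reach_closed[OF inWF aWF] WFH unfolding Ca cl_def by auto
  have aWH: "a \<in> WH" using aWF WFH by blast
  have CWF: "C \<subseteq> WF" using Ca by (auto simp: cl_def)
  have "E' \<noteq> {}" using aWF by (auto simp: WF_def restr_verts_def union_set_def)
  have cWH: "card WH = card E' + card (union_set G E')" unfolding WH_def
    using card_rv fE' finU[OF GEV] by blast
  have "(\<Sum>e\<in>E'. int (f e)) = int (card F) - int (card E')"
    unfolding F_def using sumf[OF fE fV GamEV degs assms(5)] .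
  moreover have "(\<Sum>e\<in>E'. int (f e)) = int (card (union_set G E')) - int (card (cls WH H))"
    using assms(6) \<open>E' \<noteq> {}\<close> by (simp add: tight_def mu_def compsdef WH_def H_def)
  ultimately have glob: "card F + card (cls WH H) = card WH" using cWH by simp
  have l1: "card F + card (cls WH F) \<le> card WH" using L1[OF fF fWH inWHF acF] .
  have l2: "card (cls WH H) \<le> card (cls WH F)" using L2(1)[OF fWH FH] .
  have eqc: "card (cls WH H) = card (cls WH F)" using glob l1 l2 by simp
  have HF: "reach F x y" if "x \<in> WH" "y \<in> WH" "reach H x y" for x y
    using L2(2)[OF fWH FH eqc that] .
  let ?FK = "\<lambda>K. {(e, v) \<in> F. Inl e \<in> K}"
  have "(\<Sum>K\<in>cls WH F. card (?FK K) + 1) = (\<Sum>K\<in>cls WH F. card (?FK K)) + (\<Sum>K\<in>cls WH F. 1)"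
    by (rule sum.distrib)
  also have "\<dots> = card F + card (cls WH F)"
    by (simp only: part_edges[OF fWH fF inWHF] card_eq_sum[of "cls WH F", symmetric])
  also have "\<dots> = (\<Sum>K\<in>cls WH F. card K)" using glob eqc part_card[OF fWH, of F] by linarith
  finally have sumeq: "(\<Sum>K\<in>cls WH F. card (?FK K) + 1) = (\<Sum>K\<in>cls WH F. card K)" .
  have "card (?FK C) + 1 = card C"
  proof (rule sum_mono_inv[OF sumeq])
    fix K assume "K \<in> cls WH F"
    then obtain b where "b \<in> WH" "K = cl WH F b" by (auto simp: cls_def)
    then show "card (?FK K) + 1 \<le> card K" using L1K[OF fF fWH inWHF acF] by simp
  next
    show "C \<in> cls WH F" using CWH aWH by (auto simp: cls_def)
    show "finite (cls WH F)" using fWH by (rule cls_finite)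
  qed
  define EC where "EC = {e. Inl e \<in> C}"
  have ECE': "EC \<subseteq> E'" using CWF by (auto simp: EC_def WF_def restr_verts_def)
  have fEC: "finite EC" using finite_subset[OF ECE' fE'] .
  have FKC: "?FK C = restr_edges \<Gamma> EC" using ECE' by (auto simp: F_def restr_edges_def EC_def)
  have lhs: "(\<Sum>e\<in>EC. int (f e)) = int (card (?FK C)) - int (card EC)"
    unfolding FKC using sumf[OF fE fV GamEV degs] ECE' assms(5) by blast
  have WC: "restr_verts G EC = C"
  proof (intro equalityI subsetI)
    fix z assume z: "z \<in> restr_verts G EC"
    show "z \<in> C"
    proof (cases z)
      case (Inl e) then show ?thesis using z by (auto simp: restr_verts_def EC_def)
    next
      case (Inr v)
      then obtain e where ev: "e \<in> EC" "(e, v) \<in> G" using z by (auto simp: restr_verts_def union_set_def)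
      then have "(e, v) \<in> H" using ECE' by (auto simp: H_def restr_edges_def)
      then have "Inl e \<in> WH" "Inr v \<in> WH" "reach H (Inl e) (Inr v)"
        using inWH by (auto simp: inW_def intro: reach_edge)
      then have r: "reach F (Inl e) (Inr v)" using HF by blast
      have "reach F a (Inl e)" using ev(1) CWH by (auto simp: EC_def cl_def)
      then have "reach F a (Inr v)" using r by (rule reach_trans)
      then show ?thesis using \<open>Inr v \<in> WH\<close> Inr CWH by (simp add: cl_def)
    qed
  next
    fix z assume z: "z \<in> C"
    show "z \<in> restr_verts G EC"
    proof (cases z)
      case (Inl e) then show ?thesis using z by (auto simp: restr_verts_def EC_def)
    next
      case (Inr v)
      then have "Inr v \<in> WF" using z CWF by blast
      then obtain e where ev: "e \<in> E'" "(e, v) \<in> \<Gamma>" by (auto simp: WF_def restr_verts_def union_set_def)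
      then have evF: "(e, v) \<in> F" by (auto simp: F_def restr_edges_def)
      have r: "reach F (Inr v) (Inl e)" using reach_sym[OF reach_edge[OF evF]] .
      have "Inl e \<in> WH" using ev by (auto simp: WH_def restr_verts_def)
      moreover have "reach F a (Inr v)" using z Inr CWH by (auto simp: cl_def)
      moreover have "reach F a (Inl e)" using \<open>reach F a (Inr v)\<close> r by (rule reach_trans)
      ultimately have "Inl e \<in> C" using CWH by (simp add: cl_def)
      then have "e \<in> EC" by (simp add: EC_def)
      then show ?thesis using ev GG Inr by (auto simp: restr_verts_def union_set_def)
    qed
  qed
  have ECne: "EC \<noteq> {}"
  proof -
    have "a \<in> C" using CWH aWH cl_self by blast
    then have "a \<in> restr_verts G EC" using WC by simp
    then show ?thesis by (auto simp: restr_verts_def union_set_def)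
  qed
  have compsC: "components G EC = {C}"
  proof -
    have "cl C (restr_edges G EC) x = C" if x: "x \<in> C" for x
    proof (intro equalityI subsetI)
      fix y assume y: "y \<in> C"
      then have "reach F a y" "reach F a x" using x CWH by (auto simp: cl_def)
      then have "reach F x y" using reach_trans[OF reach_sym] by blast
      then have "reach (?FK C) x y" using reach_restrict[OF inWHF aWH, of x y] x CWH by simp
      moreover have "?FK C \<subseteq> restr_edges G EC" using FKC GG by (auto simp: restr_edges_def)
      ultimately have "reach (restr_edges G EC) x y" using reach_mono by blast
      then show "y \<in> cl C (restr_edges G EC) x" using y by (simp add: cl_def)
    qed (simp add: cl_def)
    moreover have "C \<noteq> {}" using CWH aWH cl_self by blast
    ultimately show ?thesis unfolding compsdef WC cls_def by auto
  qed
  have cWC: "card C = card EC + card (union_set G EC)"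
    using card_rv[OF fEC finU[OF GEV]] WC by simp
  have mu: "mu G EC = int (card (union_set G EC)) - 1" using ECne compsC by (simp add: mu_def)
  have i1: "int (card (?FK C)) + 1 = int (card C)" using \<open>card (?FK C) + 1 = card C\<close> by linarith
  have i2: "int (card C) = int (card EC) + int (card (union_set G EC))" using cWC by simp
  have "tight G f EC" unfolding tight_def mu lhs using i1 i2 by linarith
  then show "tight G f {e. Inl e \<in> C}" by (simp add: EC_def)
qed

end
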